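(* For all $x,y\in\mathcal{X}$ and $N\in\mathbb{N}^+$, $$\tilde\alpha_N(x,y)\le\alpha(x,y)\,\mathbb{E}_{Q_{x,N}}\left[W_{x,N}^{-1}\right].$$
   Context: Let $(\mathcal{X},\mathcal{B}(\mathcal{X}))$ be a measurable space, $\pi$ a probability distribution on it with density $\pi(x)$ with respect to a reference measure, and $q$ a Markov proposal kernel. For each $x\in\mathcal{X}$, $N\in\mathbb{N}^+$, $Q_{x,N}$ is a probability distribution on $[0,\infty)$ such that $W_{x,N}\sim Q_{x,N}$ satisfies $W_{x,N}>0$ a.s. and $\mathbb{E}[W_{x,N}]=1$. Define $\alpha(x,y)=\min\{1,\frac{\pi(dy)q(y,dx)}{\pi(dx)q(x,dy)}\}$ and $\tilde\alpha_N(x,y)=\mathbb{E}[\min\{1,\frac{\pi(dy)q(y,dx)}{\pi(dx)q(x,dy)}\frac{W_{y,N}}{W_{x,N}}\}]$ with $W_{x,N}\sim Q_{x,N}$ and $W_{y,N}\sim Q_{y,N}$ independent. *)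

theory Defs
  imports "HOL-Probability.Probability"
begin

text \<open>The acceptance ratio pi(dy)q(y,dx) / (pi(dx)q(x,dy)) is represented abstractly
  by a nonnegative function r :: 'a => 'a => real (a Radon-Nikodym derivative).\<close>

definition mh_alpha :: "('a \<Rightarrow> 'a \<Rightarrow> real) \<Rightarrow> 'a \<Rightarrow> 'a \<Rightarrow> real" where
  "mh_alpha r x y = min 1 (r x y)"

text \<open>Pseudo-marginal acceptance probability, W_x ~ Q x N and W_y ~ Q y N independent
  (expectation under the product measure, written as an iterated integral).\<close>
definition pm_alpha :: "('a \<Rightarrow> 'a \<Rightarrow> real) \<Rightarrow> ('a \<Rightarrow> nat \<Rightarrow> real measure) \<Rightarrow> nat \<Rightarrow> 'a \<Rightarrow> 'a \<Rightarrow> ennreal" where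
  "pm_alpha r Q N x y =
     (\<integral>\<^sup>+ wx. (\<integral>\<^sup>+ wy. ennreal (min 1 (r x y * (wy / wx))) \<partial>(Q y N)) \<partial>(Q x N))"

end

theory Submission
  imports Defs
begin

theorem lemma3p5:
  fixes r :: "'a \<Rightarrow> 'a \<Rightarrow> real" and Q :: "'a \<Rightarrow> nat \<Rightarrow> real measure"
  assumes r_nonneg: "\<And>x y. r x y \<ge> 0"
    and Q_sets: "\<And>x N. sets (Q x N) = sets borel"
    and Q_prob: "\<And>x N. prob_space (Q x N)"
    and Q_pos: "\<And>x N. AE w in Q x N. w > 0"
    and Q_int: "\<And>x N. integrable (Q x N) (\<lambda>w. w)"
    and Q_mean: "\<And>x N. (\<integral>w. w \<partial>Q x N) = 1"
    and N_pos: "N \<ge> 1"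
  shows "pm_alpha r Q N x y \<le> ennreal (mh_alpha r x y) * (\<integral>\<^sup>+ w. ennreal (1 / w) \<partial>(Q x N))"
proof -
  have meas: "\<And>z M. f \<in> borel_measurable borel \<Longrightarrow> f \<in> borel_measurable (Q z M)" for f :: "real \<Rightarrow> ennreal"
    using Q_sets measurable_cong_sets by blast
  have meas1: "(\<lambda>w::real. ennreal (1 / w)) \<in> borel_measurable (Q z M)" for z M
    by (rule meas) measurable
  have one_y: "(\<integral>\<^sup>+ w. ennreal w \<partial>Q z M) = 1" for z M
    using nn_integral_eq_integral[OF Q_int[of z M]] Q_pos[of z M] Q_mean[of z M]
    by (metis (mono_tags, lifting) eventually_mono less_imp_le ennreal_1)
  have inv_ge: "(\<integral>\<^sup>+ w. ennreal (1 / w) \<partial>Q x N) \<ge> 1"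
  proof -
    have "(2::ennreal) = (\<integral>\<^sup>+ w. 2 \<partial>Q x N)"
      using prob_space.emeasure_space_1[OF Q_prob] by (simp add: nn_integral_const)
    also have "\<dots> \<le> (\<integral>\<^sup>+ w. ennreal (1 / w) + ennreal w \<partial>Q x N)"
    proof (rule nn_integral_mono_AE)
      show "AE w in Q x N. 2 \<le> ennreal (1 / w) + ennreal w"
        using Q_pos[of x N]
      proof (rule eventually_mono)
        fix w :: real assume w: "0 < w"
        have "2 \<le> 1 / w + w"
        proof -
          have "0 \<le> (w - 1)^2 / w" using w by simp
          also have "(w - 1)^2 / w = 1 / w + w - 2" using w
            by (simp add: field_simps power2_eq_square)
          finally show ?thesis by simp
        qed
        then have "ennreal 2 \<le> ennreal (1 / w + w)" by (rule ennreal_leI)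
        then show "2 \<le> ennreal (1 / w) + ennreal w"
          using w by (simp add: ennreal_plus[symmetric] del: ennreal_plus)
      qed
    qed
    also have "\<dots> = (\<integral>\<^sup>+ w. ennreal (1 / w) \<partial>Q x N) + 1"
      using one_y[of x N] meas1 by (subst nn_integral_add) (auto intro!: meas)
    finally have h: "2 \<le> (\<integral>\<^sup>+ w. ennreal (1 / w) \<partial>Q x N) + 1" .
    show ?thesis
    proof (rule ccontr)
      assume "\<not> ?thesis"
      then have "(\<integral>\<^sup>+ w. ennreal (1 / w) \<partial>Q x N) < 1" by simp
      then have "1 + (\<integral>\<^sup>+ w. ennreal (1 / w) \<partial>Q x N) < 1 + (1::ennreal)"
        using ennreal_add_left_cancel_less[of 1 "\<integral>\<^sup>+ w. ennreal (1 / w) \<partial>Q x N" 1] by simp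
      then have "(\<integral>\<^sup>+ w. ennreal (1 / w) \<partial>Q x N) + 1 < 2"
        by (simp add: add.commute one_add_one)
      with h show False by simp
    qed
  qed
  show ?thesis
  proof (cases "r x y \<ge> 1")
    case True
    have "pm_alpha r Q N x y \<le> (\<integral>\<^sup>+ wx. (\<integral>\<^sup>+ wy. 1 \<partial>(Q y N)) \<partial>(Q x N))"
      unfolding pm_alpha_def
      by (intro nn_integral_mono) (simp add: ennreal_leI)
    also have "\<dots> = 1"
      using prob_space.emeasure_space_1[OF Q_prob] by (simp add: nn_integral_const)
    also have "\<dots> \<le> ennreal (mh_alpha r x y) * (\<integral>\<^sup>+ w. ennreal (1 / w) \<partial>(Q x N))"
      using True inv_ge by (simp add: mh_alpha_def)
    finally show ?thesis .
  next
    case False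
    let ?r = "r x y"
    have "pm_alpha r Q N x y \<le> (\<integral>\<^sup>+ wx. ennreal (?r / wx) \<partial>(Q x N))"
      unfolding pm_alpha_def
    proof (rule nn_integral_mono_AE)
      show "AE wx in Q x N. (\<integral>\<^sup>+ wy. ennreal (min 1 (?r * (wy / wx))) \<partial>(Q y N)) \<le> ennreal (?r / wx)"
        using Q_pos[of x N]
      proof (rule eventually_mono)
        fix wx :: real assume wx: "0 < wx"
        have "(\<integral>\<^sup>+ wy. ennreal (min 1 (?r * (wy / wx))) \<partial>(Q y N))
            \<le> (\<integral>\<^sup>+ wy. ennreal (?r / wx) * ennreal wy \<partial>(Q y N))"
          using Q_pos[of y N]
        proof (intro nn_integral_mono_AE, elim eventually_mono)
          fix wy :: real assume wy: "0 < wy"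
          have "min 1 (?r * (wy / wx)) \<le> ?r / wx * wy" by simp
          then have "ennreal (min 1 (?r * (wy / wx))) \<le> ennreal (?r / wx * wy)" by (rule ennreal_leI)
          also have "\<dots> = ennreal (?r / wx) * ennreal wy"
            using wx wy r_nonneg[of x y] by (intro ennreal_mult) auto
          finally show "ennreal (min 1 (?r * (wy / wx))) \<le> ennreal (?r / wx) * ennreal wy" .
        qed
        also have "\<dots> = ennreal (?r / wx) * (\<integral>\<^sup>+ wy. ennreal wy \<partial>(Q y N))"
          by (rule nn_integral_cmult) (auto intro!: meas)
        also have "\<dots> = ennreal (?r / wx)" using one_y by simp
        finally show "(\<integral>\<^sup>+ wy. ennreal (min 1 (?r * (wy / wx))) \<partial>(Q y N)) \<le> ennreal (?r / wx)" .
      qed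
    qed
    also have "\<dots> = (\<integral>\<^sup>+ wx. ennreal ?r * ennreal (1 / wx) \<partial>(Q x N))"
      using Q_pos[of x N]
      by (intro nn_integral_cong_AE, elim eventually_mono)
         (simp add: ennreal_mult[symmetric] r_nonneg)
    also have "\<dots> = ennreal ?r * (\<integral>\<^sup>+ wx. ennreal (1 / wx) \<partial>(Q x N))"
      by (rule nn_integral_cmult) (rule meas1)
    also have "\<dots> = ennreal (mh_alpha r x y) * (\<integral>\<^sup>+ w. ennreal (1 / w) \<partial>(Q x N))"
      using False by (simp add: mh_alpha_def)
    finally show ?thesis .
  qed
qed

end
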